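(* Let $1\le k\le n$ and let $K$ be a $k$-dimensional vector space. Let $X(k,n)=\{(I,J)\in\mathrm{Hom}(\mathbb{C}^n_x,K)\oplus\mathrm{Hom}^{\mathrm{st}}(K,\mathbb{C}^n_y)\}/GL(K)$ and $X^\vee(k,n)=\{(I,J)\in\mathrm{Hom}^{\mathrm{st}}(\mathbb{C}^n_x,K)\oplus\mathrm{Hom}(K,\mathbb{C}^n_y)\}/GL(K)$, where $\mathrm{Hom}^{\mathrm{st}}$ denotes maps of maximal rank. Then the $\mathbb{C}^\times_q\times T_x\times T_y$-equivariant Hirzebruch genera agree: $$\chi\Big(X(k,n),\sum_i(-t)^i\Omega^i\Big)=\chi\Big(X^\vee(k,n),\sum_i(-t)^i\Omega^i\Big),$$ equivalently, as rational functions, $$\sum_{\substack{I\subset\{1,\dots,n\}\\|I|=k}}\prod_{\substack{i\in I\\ j\notin I}}\frac{1-ty_j/y_i}{1-y_j/y_i}\prod_{\substack{i\in I\\ \ell=1,\dots,n}}\frac{1-tq^{-1}y_i/x_\ell}{1-q^{-1}y_i/x_\ell}=\sum_{\substack{I\subset\{1,\dots,n\}\\|I|=k}}\prod_{\substack{i\in I\\ j\notin I}}\frac{1-tx_i/x_j}{1-x_i/x_j}\prod_{\substack{\ell\in I\\ i=1,\dots,n}}\frac{1-tq^{-1}y_i/x_\ell}{1-q^{-1}y_i/x_\ell}.$$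
   Context: $T_x,T_y$ are maximal tori of $GL(\mathbb{C}^n_x)$, $GL(\mathbb{C}^n_y)$ with coordinates $x_\ell$, $y_i$; $\mathbb{C}^\times_q$ scales $\mathrm{Hom}(\mathbb{C}^n_x,K)$ with weight $+1$ and acts trivially on $\mathrm{Hom}(K,\mathbb{C}^n_y)$. With $\mathscr{K}$ the tautological bundle, the $K$-theory class of the tangent bundle on both spaces is $\mathbb{C}^n_y\otimes\mathscr{K}^*+q\mathscr{K}\otimes(\mathbb{C}^n_x)^*-\mathscr{K}\otimes\mathscr{K}^*$. Torus fixed points on both are indexed by $I\subset\{1,\dots,n\}$, $|I|=k$, with $\mathscr{K}|_I=\sum_{i\in I}y_i^{-1}$ on $X$ and $\mathscr{K}|_I=\sum_{\ell\in I}(qx_\ell)^{-1}$ on $X^\vee$. The Hirzebruch genus $\chi(X,\sum_i(-t)^i\Omega^i_X)$ of these nonproper spaces is defined by equivariant localization as a rational function of $(q,x,y,t)$. *)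

theory Defs
  imports Complex_Main
begin

definition fixed_pts :: "nat \<Rightarrow> nat \<Rightarrow> nat set set" where
  "fixed_pts k n = {I. I \<subseteq> {1..n} \<and> card I = k}"

definition hirz_X :: "nat \<Rightarrow> nat \<Rightarrow> complex \<Rightarrow> complex \<Rightarrow> (nat \<Rightarrow> complex) \<Rightarrow> (nat \<Rightarrow> complex) \<Rightarrow> complex" where
  "hirz_X k n q t x y =
     (\<Sum>I\<in>fixed_pts k n.
        (\<Prod>i\<in>I. \<Prod>j\<in>{1..n} - I. (1 - t * y j / y i) / (1 - y j / y i)) *
        (\<Prod>i\<in>I. \<Prod>l\<in>{1..n}. (1 - t * y i / (q * x l)) / (1 - y i / (q * x l))))"

definition hirz_Xdual :: "nat \<Rightarrow> nat \<Rightarrow> complex \<Rightarrow> complex \<Rightarrow> (nat \<Rightarrow> complex) \<Rightarrow> (nat \<Rightarrow> complex) \<Rightarrow> complex" where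
  "hirz_Xdual k n q t x y =
     (\<Sum>I\<in>fixed_pts k n.
        (\<Prod>i\<in>I. \<Prod>j\<in>{1..n} - I. (1 - t * x i / x j) / (1 - x i / x j)) *
        (\<Prod>l\<in>I. \<Prod>i\<in>{1..n}. (1 - t * y i / (q * x l)) / (1 - y i / (q * x l))))"

end

theory Submission
  imports Defs "HOL-Computational_Algebra.Polynomial"
begin


definition pf :: "nat \<Rightarrow> (complex \<Rightarrow> complex) \<Rightarrow> bool" where
  "pf d g \<longleftrightarrow> (\<exists>P. degree P \<le> d \<and> (\<forall>z. poly P z = g z))"

lemma pf_const: "pf d (\<lambda>z. c)"
  unfolding pf_def by (rule exI[of _ "[:c:]"]) simp

lemma pf_lin: "pf 1 (\<lambda>z. u * z + v)"
  unfolding pf_def by (rule exI[of _ "[:v, u:]"]) (simp add: algebra_simps)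

lemma pf_mono: "pf d g \<Longrightarrow> d \<le> e \<Longrightarrow> pf e g"
  unfolding pf_def using order.trans by blast

lemma pf_add: "pf d g \<Longrightarrow> pf d h \<Longrightarrow> pf d (\<lambda>z. g z + h z)"
  unfolding pf_def
proof (elim exE conjE)
  fix P Q assume "degree P \<le> d" "\<forall>z. poly P z = g z" "degree Q \<le> d" "\<forall>z. poly Q z = h z"
  then show "\<exists>R. degree R \<le> d \<and> (\<forall>z. poly R z = g z + h z)"
    by (intro exI[of _ "P + Q"]) (auto intro: order.trans[OF degree_add_le_max])
qed

lemma pf_uminus: "pf d g \<Longrightarrow> pf d (\<lambda>z. - g z)"
  unfolding pf_def by (metis degree_minus poly_minus)

lemma pf_diff: "pf d g \<Longrightarrow> pf d h \<Longrightarrow> pf d (\<lambda>z. g z - h z)"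
  using pf_add[of d g "\<lambda>z. - h z"] pf_uminus[of d h] by simp

lemma pf_mult: "pf d g \<Longrightarrow> pf e h \<Longrightarrow> pf (d + e) (\<lambda>z. g z * h z)"
  unfolding pf_def
proof (elim exE conjE)
  fix P Q assume "degree P \<le> d" "\<forall>z. poly P z = g z" "degree Q \<le> e" "\<forall>z. poly Q z = h z"
  then show "\<exists>R. degree R \<le> d + e \<and> (\<forall>z. poly R z = g z * h z)"
    by (intro exI[of _ "P * Q"]) (auto intro: order.trans[OF degree_mult_le])
qed

lemma pf_sum: "finite S \<Longrightarrow> (\<And>i. i \<in> S \<Longrightarrow> pf d (g i)) \<Longrightarrow> pf d (\<lambda>z. \<Sum>i\<in>S. g i z)"
  by (induction S rule: finite_induct) (auto intro: pf_const pf_add)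

lemma pf_prod: "finite S \<Longrightarrow> (\<And>i. i \<in> S \<Longrightarrow> pf 1 (g i)) \<Longrightarrow> pf (card S) (\<lambda>z. \<Prod>i\<in>S. g i z)"
proof (induction S rule: finite_induct)
  case empty then show ?case by (simp add: pf_const)
next
  case (insert x F)
  then have "pf (1 + card F) (\<lambda>z. g x z * (\<Prod>i\<in>F. g i z))"
    by (intro pf_mult) auto
  then show ?case using insert by simp
qed

lemma pf_zero:
  assumes "pf d g" "finite S" "card S > d" "\<And>z. z \<in> S \<Longrightarrow> g z = 0"
  shows "g z = 0"
proof -
  obtain P where P: "degree P \<le> d" "\<And>z. poly P z = g z" using assms(1) unfolding pf_def by auto
  have "P = 0"
  proof (rule ccontr)
    assume "P \<noteq> 0"
    then have "card {x. poly P x = 0} \<le> degree P" by (rule card_poly_roots_bound)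
    moreover have "S \<subseteq> {x. poly P x = 0}" using P assms(4) by auto
    then have "card S \<le> card {x. poly P x = 0}" using \<open>P \<noteq> 0\<close> by (intro card_mono poly_roots_finite)
    ultimately show False using P(1) assms(3) by simp
  qed
  then show ?thesis using P by simp
qed

definition pfa :: "(complex \<Rightarrow> complex) \<Rightarrow> bool" where "pfa g \<longleftrightarrow> (\<exists>d. pf d g)"

lemma pfa_const: "pfa (\<lambda>z. c)" unfolding pfa_def using pf_const by blast
lemma pfa_lin: "pfa (\<lambda>z. u * z + v)" unfolding pfa_def using pf_lin by blast
lemma pfa_add: "pfa g \<Longrightarrow> pfa h \<Longrightarrow> pfa (\<lambda>z. g z + h z)"
  unfolding pfa_def by (metis le_add1 le_add2 pf_add pf_mono)
lemma pfa_diff: "pfa g \<Longrightarrow> pfa h \<Longrightarrow> pfa (\<lambda>z. g z - h z)"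
  unfolding pfa_def by (metis le_add1 le_add2 pf_diff pf_mono)
lemma pfa_mult: "pfa g \<Longrightarrow> pfa h \<Longrightarrow> pfa (\<lambda>z. g z * h z)"
  unfolding pfa_def using pf_mult by blast
lemma pfa_sum: "finite S \<Longrightarrow> (\<And>i. i \<in> S \<Longrightarrow> pfa (g i)) \<Longrightarrow> pfa (\<lambda>z. \<Sum>i\<in>S. g i z)"
  by (induction S rule: finite_induct) (auto intro: pfa_const pfa_add)
lemma pfa_prod: "finite S \<Longrightarrow> (\<And>i. i \<in> S \<Longrightarrow> pfa (g i)) \<Longrightarrow> pfa (\<lambda>z. \<Prod>i\<in>S. g i z)"
  by (induction S rule: finite_induct) (auto intro: pfa_const pfa_mult)

lemma pfa_zero:
  assumes "pfa g" "finite S" "\<And>z. z \<notin> S \<Longrightarrow> g z = 0"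
  shows "g z = 0"
proof -
  obtain d where d: "pf d g" using assms(1) unfolding pfa_def by auto
  have "infinite (- S)" using assms(2) infinite_UNIV_char_0 by (metis Compl_eq_Diff_UNIV finite_Diff2 finite.emptyI)
  then obtain T where T: "T \<subseteq> - S" "finite T" "card T = Suc d"
    by (meson infinite_arbitrarily_large)
  show ?thesis by (rule pf_zero[OF d T(2)]) (use T assms(3) in auto)
qed



definition Fz :: "complex \<Rightarrow> complex \<Rightarrow> complex" where "Fz t w = (1 - t * w) / (1 - w)"

definition subs :: "nat \<Rightarrow> nat set \<Rightarrow> nat set set" where "subs k A = {I. I \<subseteq> A \<and> card I = k}"

definition Lg :: "nat \<Rightarrow> nat set \<Rightarrow> nat set \<Rightarrow> (nat \<Rightarrow> complex) \<Rightarrow> (nat \<Rightarrow> complex) \<Rightarrow> complex \<Rightarrow> complex" where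
  "Lg k A B a b t = (\<Sum>I\<in>subs k A. (\<Prod>i\<in>I. \<Prod>j\<in>A - I. Fz t (a j / a i)) * (\<Prod>i\<in>I. \<Prod>l\<in>B. Fz t (a i / b l)))"

definition Rg :: "nat \<Rightarrow> nat set \<Rightarrow> nat set \<Rightarrow> (nat \<Rightarrow> complex) \<Rightarrow> (nat \<Rightarrow> complex) \<Rightarrow> complex \<Rightarrow> complex" where
  "Rg k A B a b t = (\<Sum>J\<in>subs k B. (\<Prod>i\<in>J. \<Prod>j\<in>B - J. Fz t (b i / b j)) * (\<Prod>l\<in>J. \<Prod>i\<in>A. Fz t (a i / b l)))"

lemma F1: "c \<noteq> 0 \<Longrightarrow> z \<noteq> c \<Longrightarrow> Fz t (z / c) * (z - c) = t * z - c"
  unfolding Fz_def by (simp add: field_simps)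

lemma F2: "z \<noteq> 0 \<Longrightarrow> z \<noteq> c \<Longrightarrow> Fz t (c / z) * (z - c) = z - t * c"
  unfolding Fz_def by (simp add: field_simps)

lemma finite_subs: "finite A \<Longrightarrow> finite (subs k A)"
  unfolding subs_def by (rule finite_subset[of _ "Pow A"]) auto

lemma subs_0: "finite A \<Longrightarrow> subs 0 A = {{}}"
  unfolding subs_def by (auto dest: finite_subset)

lemma subs_mem: "I \<in> subs k A \<Longrightarrow> I \<subseteq> A \<and> card I = k"
  unfolding subs_def by auto

lemma subs_split:
  assumes "finite A" "x \<notin> A"
  shows "(\<Sum>I\<in>subs (Suc k) (insert x A). g I) = (\<Sum>I\<in>subs (Suc k) A. g I) + (\<Sum>I\<in>subs k A. g (insert x I))"
proof -
  have eq: "subs (Suc k) (insert x A) = subs (Suc k) A \<union> insert x ` subs k A"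
  proof (intro equalityI subsetI)
    fix I assume I: "I \<in> subs (Suc k) (insert x A)"
    show "I \<in> subs (Suc k) A \<union> insert x ` subs k A"
    proof (cases "x \<in> I")
      case True
      have "finite I" using I assms(1) unfolding subs_def by (auto intro: finite_subset)
      then have "I - {x} \<in> subs k A" using I True unfolding subs_def by auto
      moreover have "I = insert x (I - {x})" using True by auto
      ultimately show ?thesis by blast
    next
      case False then show ?thesis using I unfolding subs_def by auto
    qed
  next
    fix I assume "I \<in> subs (Suc k) A \<union> insert x ` subs k A"
    then show "I \<in> subs (Suc k) (insert x A)"
    proof
      assume "I \<in> subs (Suc k) A" then show ?thesis unfolding subs_def by auto
    next
      assume "I \<in> insert x ` subs k A"
      then obtain J where J: "J \<in> subs k A" "I = insert x J" by auto
      have "finite J" using J assms(1) unfolding subs_def by (auto intro: finite_subset)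
      moreover have "x \<notin> J" using J assms(2) unfolding subs_def by auto
      ultimately show ?thesis using J unfolding subs_def by auto
    qed
  qed
  have disj: "subs (Suc k) A \<inter> insert x ` subs k A = {}" using assms(2) unfolding subs_def by auto
  have inj: "inj_on (insert x) (subs k A)" using assms(2) unfolding subs_def inj_on_def
  proof (intro ballI impI)
    fix I J assume "I \<in> {I. I \<subseteq> A \<and> card I = k}" "J \<in> {I. I \<subseteq> A \<and> card I = k}" "insert x I = insert x J"
    then have "x \<notin> I" "x \<notin> J" using assms(2) by auto
    then show "I = J" using \<open>insert x I = insert x J\<close> by (metis Diff_insert_absorb)
  qed
  show ?thesis
    unfolding eq using finite_subs[OF assms(1)] disj
    by (simp add: sum.union_disjoint sum.reindex[OF inj])
qed



definition cL :: "nat set \<Rightarrow> nat set \<Rightarrow> (nat \<Rightarrow> complex) \<Rightarrow> (nat \<Rightarrow> complex) \<Rightarrow> complex \<Rightarrow> nat set \<Rightarrow> complex" where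
  "cL A B a b t I = (\<Prod>i\<in>I. \<Prod>j\<in>A - I. Fz t (a j / a i)) * (\<Prod>i\<in>I. \<Prod>l\<in>B. Fz t (a i / b l))"

definition cR :: "nat set \<Rightarrow> nat set \<Rightarrow> (nat \<Rightarrow> complex) \<Rightarrow> (nat \<Rightarrow> complex) \<Rightarrow> complex \<Rightarrow> nat set \<Rightarrow> complex" where
  "cR A B a b t J = (\<Prod>i\<in>J. \<Prod>j\<in>B - J. Fz t (b i / b j)) * (\<Prod>l\<in>J. \<Prod>i\<in>A. Fz t (a i / b l))"

lemma Lg_cL: "Lg k A B a b t = (\<Sum>I\<in>subs k A. cL A B a b t I)"
  unfolding Lg_def cL_def ..
lemma Rg_cR: "Rg k A B a b t = (\<Sum>J\<in>subs k B. cR A B a b t J)"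
  unfolding Rg_def cR_def ..

lemma prod_split: "finite A \<Longrightarrow> I \<subseteq> A \<Longrightarrow> prod g A = prod g I * prod g (A - I)"
  by (metis mult.commute prod.subset_diff)

lemma T1:
  assumes fin: "finite A" "finite B" and al: "\<alpha> \<notin> A" and I: "I \<subseteq> A"
    and z: "\<And>i. i \<in> A \<Longrightarrow> z \<noteq> a i" and a0: "\<And>i. i \<in> A \<Longrightarrow> a i \<noteq> 0"
  shows "cL (insert \<alpha> A) B (a(\<alpha>:=z)) b t I * ((\<Prod>l\<in>B. z - b l) * (\<Prod>j\<in>A. z - a j))
       = cL A B a b t I * ((\<Prod>i\<in>I. t*z - a i) * (\<Prod>j\<in>A-I. z - a j) * (\<Prod>l\<in>B. z - b l))"
proof -
  have fI: "finite I" using I fin finite_subset by blast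
  have aI: "\<alpha> \<notin> I" "\<alpha> \<notin> A - I" using I al by auto
  have 1: "(\<Prod>j\<in>insert \<alpha> A - I. Fz t ((a(\<alpha>:=z)) j / (a(\<alpha>:=z)) i)) = Fz t (z / a i) * (\<Prod>j\<in>A - I. Fz t (a j / a i))"
    if "i \<in> I" for i
  proof -
    have "insert \<alpha> A - I = insert \<alpha> (A - I)" using aI by auto
    moreover have "i \<noteq> \<alpha>" using that aI by auto
    moreover have "(\<Prod>j\<in>A - I. Fz t ((a(\<alpha>:=z)) j / (a(\<alpha>:=z)) i)) = (\<Prod>j\<in>A - I. Fz t (a j / a i))"
      using al \<open>i \<noteq> \<alpha>\<close> by (intro prod.cong) auto
    ultimately show ?thesis using fin aI by simp
  qed
  have 2: "(\<Prod>i\<in>I. \<Prod>l\<in>B. Fz t ((a(\<alpha>:=z)) i / b l)) = (\<Prod>i\<in>I. \<Prod>l\<in>B. Fz t (a i / b l))"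
    using aI by (intro prod.cong) auto
  have 3: "cL (insert \<alpha> A) B (a(\<alpha>:=z)) b t I = (\<Prod>i\<in>I. Fz t (z / a i)) * cL A B a b t I"
    unfolding cL_def using 1 2 by (simp add: prod.distrib mult.assoc)
  have 4: "(\<Prod>j\<in>A. z - a j) = (\<Prod>i\<in>I. z - a i) * (\<Prod>j\<in>A-I. z - a j)"
    by (rule prod_split[OF fin(1) I])
  have 5: "(\<Prod>i\<in>I. Fz t (z / a i)) * (\<Prod>i\<in>I. z - a i) = (\<Prod>i\<in>I. t*z - a i)"
    unfolding prod.distrib[symmetric] using I z a0 by (intro prod.cong) (auto intro!: F1)
  show ?thesis unfolding 3 4
    by (simp add: 5[symmetric] ac_simps)
qed

lemma T2:
  assumes fin: "finite A" "finite B" and al: "\<alpha> \<notin> A" and I: "I \<subseteq> A"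
    and z: "\<And>i. i \<in> A \<Longrightarrow> z \<noteq> a i" and z0: "z \<noteq> 0"
    and zb: "\<And>l. l \<in> B \<Longrightarrow> z \<noteq> b l" and b0: "\<And>l. l \<in> B \<Longrightarrow> b l \<noteq> 0"
  shows "cL (insert \<alpha> A) B (a(\<alpha>:=z)) b t (insert \<alpha> I) * ((\<Prod>l\<in>B. z - b l) * (\<Prod>j\<in>A. z - a j))
       = cL A B a b t I * ((\<Prod>j\<in>A-I. z - t*a j) * (\<Prod>i\<in>I. z - a i) * (\<Prod>l\<in>B. t*z - b l))"
proof -
  have fI: "finite I" using I fin finite_subset by blast
  have aI: "\<alpha> \<notin> I" "\<alpha> \<notin> A - I" using I al by auto
  have e: "insert \<alpha> A - insert \<alpha> I = A - I" using aI by auto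
  have 1: "(\<Prod>j\<in>A - I. Fz t ((a(\<alpha>:=z)) j / (a(\<alpha>:=z)) i)) = (\<Prod>j\<in>A - I. Fz t (a j / a i))"
    if "i \<in> I" for i
    using aI that by (intro prod.cong) auto
  have h1: "(\<Prod>j\<in>A - I. Fz t ((a(\<alpha>:=z)) j / (a(\<alpha>:=z)) \<alpha>)) = (\<Prod>j\<in>A - I. Fz t (a j / z))"
    using aI by (intro prod.cong) auto
  have 2: "(\<Prod>i\<in>I. \<Prod>l\<in>B. Fz t ((a(\<alpha>:=z)) i / b l)) = (\<Prod>i\<in>I. \<Prod>l\<in>B. Fz t (a i / b l))"
    using aI by (intro prod.cong) auto
  have 3: "cL (insert \<alpha> A) B (a(\<alpha>:=z)) b t (insert \<alpha> I) = (\<Prod>j\<in>A - I. Fz t (a j / z)) * (\<Prod>l\<in>B. Fz t (z / b l)) * cL A B a b t I"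
  proof -
    have h1a: "(\<Prod>i\<in>I. \<Prod>j\<in>A - I. Fz t ((a(\<alpha>:=z)) j / (a(\<alpha>:=z)) i)) = (\<Prod>i\<in>I. \<Prod>j\<in>A - I. Fz t (a j / a i))"
      using 1 by (rule prod.cong[OF refl])
    show ?thesis unfolding cL_def e prod.insert[OF fI aI(1)] h1 h1a 2 by (simp add: ac_simps)
  qed
  have 4: "(\<Prod>j\<in>A. z - a j) = (\<Prod>i\<in>I. z - a i) * (\<Prod>j\<in>A-I. z - a j)"
    by (rule prod_split[OF fin(1) I])
  have 5: "(\<Prod>j\<in>A - I. Fz t (a j / z)) * (\<Prod>j\<in>A-I. z - a j) = (\<Prod>j\<in>A-I. z - t*a j)"
    unfolding prod.distrib[symmetric] using z z0 by (intro prod.cong) (auto intro!: F2)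
  have 6: "(\<Prod>l\<in>B. Fz t (z / b l)) * (\<Prod>l\<in>B. z - b l) = (\<Prod>l\<in>B. t*z - b l)"
    unfolding prod.distrib[symmetric] using zb b0 by (intro prod.cong) (auto intro!: F1)
  show ?thesis unfolding 3 4
    by (simp add: 5[symmetric] 6[symmetric] ac_simps)
qed

lemma TR:
  assumes fin: "finite A" "finite B" and al: "\<alpha> \<notin> A" and J: "J \<subseteq> B"
    and zb: "\<And>l. l \<in> B \<Longrightarrow> z \<noteq> b l" and b0: "\<And>l. l \<in> B \<Longrightarrow> b l \<noteq> 0"
  shows "cR (insert \<alpha> A) B (a(\<alpha>:=z)) b t J * ((\<Prod>l\<in>B. z - b l) * (\<Prod>j\<in>A. z - a j))
       = cR A B a b t J * ((\<Prod>l\<in>J. t*z - b l) * (\<Prod>l\<in>B-J. z - b l) * (\<Prod>j\<in>A. z - a j))"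
proof -
  have 1: "(\<Prod>i\<in>insert \<alpha> A. Fz t ((a(\<alpha>:=z)) i / b l)) = Fz t (z / b l) * (\<Prod>i\<in>A. Fz t (a i / b l))" for l
  proof -
    have "(\<Prod>i\<in>A. Fz t ((a(\<alpha>:=z)) i / b l)) = (\<Prod>i\<in>A. Fz t (a i / b l))"
      using al by (intro prod.cong) auto
    then show ?thesis using fin al by simp
  qed
  have 3: "cR (insert \<alpha> A) B (a(\<alpha>:=z)) b t J = (\<Prod>l\<in>J. Fz t (z / b l)) * cR A B a b t J"
    unfolding cR_def 1 by (simp add: prod.distrib ac_simps)
  have 4: "(\<Prod>l\<in>B. z - b l) = (\<Prod>l\<in>J. z - b l) * (\<Prod>l\<in>B-J. z - b l)"
    by (rule prod_split[OF fin(2) J])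
  have 6: "(\<Prod>l\<in>J. Fz t (z / b l)) * (\<Prod>l\<in>J. z - b l) = (\<Prod>l\<in>J. t*z - b l)"
    unfolding prod.distrib[symmetric] using zb b0 J by (intro prod.cong) (auto intro!: F1)
  show ?thesis unfolding 3 4
    by (simp add: 6[symmetric] ac_simps)
qed



definition G :: "nat set \<Rightarrow> nat set \<Rightarrow> (nat \<Rightarrow> complex) \<Rightarrow> (nat \<Rightarrow> complex) \<Rightarrow> complex \<Rightarrow> nat \<Rightarrow> complex \<Rightarrow> complex" where
 "G A B a b t k z =
   (\<Sum>I\<in>subs (Suc k) A. cL A B a b t I * ((\<Prod>i\<in>I. t*z - a i) * (\<Prod>j\<in>A-I. z - a j) * (\<Prod>l\<in>B. z - b l)))
 + (\<Sum>I\<in>subs k A. cL A B a b t I * ((\<Prod>j\<in>A-I. z - t*a j) * (\<Prod>i\<in>I. z - a i) * (\<Prod>l\<in>B. t*z - b l)))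
 - (\<Sum>J\<in>subs (Suc k) B. cR A B a b t J * ((\<Prod>l\<in>J. t*z - b l) * (\<Prod>l\<in>B-J. z - b l) * (\<Prod>j\<in>A. z - a j)))"

lemma pf_lin2: "pf 1 (\<lambda>z. u * z - v)"
  using pf_lin[of u "-v"] by simp
lemma pf_lin3: "pf 1 (\<lambda>z. z - v)"
  using pf_lin[of 1 "-v"] by simp

lemma pf_three:
  assumes "finite A" "finite B" "I \<subseteq> A" "\<And>i. pf 1 (f i)" "\<And>i. pf 1 (g i)" "\<And>i. pf 1 (h i)"
  shows "pf (card A + card B) (\<lambda>z. c * ((\<Prod>i\<in>I. f i z) * (\<Prod>j\<in>A-I. g j z) * (\<Prod>l\<in>B. h l z)))"
proof -
  have fI: "finite I" using assms finite_subset by blast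
  have "pf (0 + (card I + card (A - I) + card B)) (\<lambda>z. c * ((\<Prod>i\<in>I. f i z) * (\<Prod>j\<in>A-I. g j z) * (\<Prod>l\<in>B. h l z)))"
    by (intro pf_mult pf_const pf_prod) (use assms fI in auto)
  moreover have "card I + card (A - I) = card A"
    using assms fI by (metis card_Diff_subset le_add_diff_inverse card_mono)
  ultimately show ?thesis by simp
qed

lemma pf_three':
  assumes "finite A" "finite B" "I \<subseteq> A" "\<And>i. pf 1 (f i)" "\<And>i. pf 1 (g i)" "\<And>i. pf 1 (h i)"
  shows "pf (card A + card B) (\<lambda>z. c * ((\<Prod>j\<in>A-I. g j z) * (\<Prod>i\<in>I. f i z) * (\<Prod>l\<in>B. h l z)))"
  using pf_three[OF assms, of c] by (simp add: ac_simps)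

lemma pf_threeR:
  assumes "finite A" "finite B" "J \<subseteq> B" "\<And>i. pf 1 (f i)" "\<And>i. pf 1 (g i)" "\<And>i. pf 1 (h i)"
  shows "pf (card A + card B) (\<lambda>z. c * ((\<Prod>i\<in>J. f i z) * (\<Prod>j\<in>B-J. g j z) * (\<Prod>l\<in>A. h l z)))"
  using pf_three[OF assms(2,1,3-6), of c] by (simp add: ac_simps)

lemma G_pf: "finite A \<Longrightarrow> finite B \<Longrightarrow> pf (card A + card B) (G A B a b t k)"
  unfolding G_def
  apply (intro pf_add pf_diff pf_sum finite_subs)
  apply (assumption)
  apply (rule pf_three; (assumption | rule pf_lin2 pf_lin3 | blast dest: subs_mem))
  apply (assumption)
  apply (rule pf_three'; (assumption | rule pf_lin2 pf_lin3 | blast dest: subs_mem))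
  apply (assumption)
  apply (rule pf_threeR; (assumption | rule pf_lin2 pf_lin3 | blast dest: subs_mem))
  done

lemma G_eq:
  assumes fin: "finite A" "finite B" and al: "\<alpha> \<notin> A"
    and z: "\<And>i. i \<in> A \<Longrightarrow> z \<noteq> a i" and z0: "z \<noteq> 0" and a0: "\<And>i. i \<in> A \<Longrightarrow> a i \<noteq> 0"
    and zb: "\<And>l. l \<in> B \<Longrightarrow> z \<noteq> b l" and b0: "\<And>l. l \<in> B \<Longrightarrow> b l \<noteq> 0"
  shows "(Lg (Suc k) (insert \<alpha> A) B (a(\<alpha>:=z)) b t - Rg (Suc k) (insert \<alpha> A) B (a(\<alpha>:=z)) b t)
           * ((\<Prod>l\<in>B. z - b l) * (\<Prod>j\<in>A. z - a j)) = G A B a b t k z"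
proof -
  let ?M = "(\<Prod>l\<in>B. z - b l) * (\<Prod>j\<in>A. z - a j)"
  have L: "Lg (Suc k) (insert \<alpha> A) B (a(\<alpha>:=z)) b t * ?M =
     (\<Sum>I\<in>subs (Suc k) A. cL A B a b t I * ((\<Prod>i\<in>I. t*z - a i) * (\<Prod>j\<in>A-I. z - a j) * (\<Prod>l\<in>B. z - b l)))
   + (\<Sum>I\<in>subs k A. cL A B a b t I * ((\<Prod>j\<in>A-I. z - t*a j) * (\<Prod>i\<in>I. z - a i) * (\<Prod>l\<in>B. t*z - b l)))"
    unfolding Lg_cL subs_split[OF fin(1) al] distrib_right sum_distrib_right
    by (intro arg_cong2[where f="(+)"] sum.cong refl T1 T2) (use assms in \<open>auto dest: subs_mem\<close>)
  have R: "Rg (Suc k) (insert \<alpha> A) B (a(\<alpha>:=z)) b t * ?M =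
     (\<Sum>J\<in>subs (Suc k) B. cR A B a b t J * ((\<Prod>l\<in>J. t*z - b l) * (\<Prod>l\<in>B-J. z - b l) * (\<Prod>j\<in>A. z - a j)))"
    unfolding Rg_cR sum_distrib_right
    by (intro sum.cong refl TR) (use assms in \<open>auto dest: subs_mem\<close>)
  show ?thesis unfolding left_diff_distrib L R G_def ..
qed



lemma cL_remove:
  assumes "finite B" "m \<in> B"
  shows "cL A B a b t I = cL A (B - {m}) a b t I * (\<Prod>i\<in>I. Fz t (a i / b m))"
  unfolding cL_def prod.remove[OF assms] by (simp add: prod.distrib ac_simps)

lemma S2term:
  assumes fin: "finite A" "finite B" and m: "m \<in> B" and I: "I \<subseteq> A"
    and bm0: "b m \<noteq> 0" and ba: "\<And>i. i \<in> A \<Longrightarrow> b m \<noteq> a i"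
  shows "cL A B a b t I * ((\<Prod>j\<in>A-I. b m - t*a j) * (\<Prod>i\<in>I. b m - a i) * (\<Prod>l\<in>B. t*b m - b l))
     = ((\<Prod>j\<in>A. b m - t * a j) * (\<Prod>l\<in>B. t * b m - b l)) * cL A (B - {m}) a b t I"
proof -
  have 5: "(\<Prod>i\<in>I. Fz t (a i / b m)) * (\<Prod>i\<in>I. b m - a i) = (\<Prod>i\<in>I. b m - t * a i)"
    unfolding prod.distrib[symmetric] using I bm0 ba by (intro prod.cong) (auto intro!: F2)
  have 4: "(\<Prod>j\<in>A. b m - t * a j) = (\<Prod>i\<in>I. b m - t * a i) * (\<Prod>j\<in>A-I. b m - t * a j)"
    by (rule prod_split[OF fin(1) I])
  show ?thesis unfolding cL_remove[OF fin(2) m] 4 5[symmetric] by (simp add: ac_simps)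
qed

lemma S3term:
  assumes fin: "finite A" "finite B" and m: "m \<in> B" and J: "J \<subseteq> B - {m}"
    and bm0: "b m \<noteq> 0" and ba: "\<And>i. i \<in> A \<Longrightarrow> b m \<noteq> a i"
    and bb: "\<And>l. l \<in> B \<Longrightarrow> l \<noteq> m \<Longrightarrow> b m \<noteq> b l" and b0: "\<And>l. l \<in> B \<Longrightarrow> b l \<noteq> 0"
  shows "cR A B a b t (insert m J) * ((\<Prod>l\<in>insert m J. t*b m - b l) * (\<Prod>l\<in>B - insert m J. b m - b l) * (\<Prod>j\<in>A. b m - a j))
     = ((\<Prod>j\<in>A. b m - t * a j) * (\<Prod>l\<in>B. t * b m - b l)) * cR A (B - {m}) a b t J"
proof -
  have fB': "finite (B - {m})" using fin by auto
  have fJ: "finite J" using J fB' finite_subset by blast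
  have mJ: "m \<notin> J" using J by auto
  have e: "B - insert m J = (B - {m}) - J" by auto
  have 1: "(\<Prod>i\<in>insert m J. \<Prod>j\<in>B - insert m J. Fz t (b i / b j))
        = (\<Prod>j\<in>(B - {m}) - J. Fz t (b m / b j)) * (\<Prod>i\<in>J. \<Prod>j\<in>(B - {m}) - J. Fz t (b i / b j))"
    unfolding e prod.insert[OF fJ mJ] ..
  have 2: "(\<Prod>l\<in>insert m J. \<Prod>i\<in>A. Fz t (a i / b l)) = (\<Prod>i\<in>A. Fz t (a i / b m)) * (\<Prod>l\<in>J. \<Prod>i\<in>A. Fz t (a i / b l))"
    unfolding prod.insert[OF fJ mJ] ..
  have 3: "cR A B a b t (insert m J) = (\<Prod>j\<in>(B - {m}) - J. Fz t (b m / b j)) * (\<Prod>i\<in>A. Fz t (a i / b m)) * cR A (B - {m}) a b t J"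
    unfolding cR_def 1 2 by (simp add: ac_simps)
  have 5: "(\<Prod>j\<in>(B - {m}) - J. Fz t (b m / b j)) * (\<Prod>j\<in>(B - {m}) - J. b m - b j) = (\<Prod>j\<in>(B - {m}) - J. t * b m - b j)"
    unfolding prod.distrib[symmetric] using bb b0 by (intro prod.cong) (auto intro!: F1)
  have 6: "(\<Prod>i\<in>A. Fz t (a i / b m)) * (\<Prod>i\<in>A. b m - a i) = (\<Prod>i\<in>A. b m - t * a i)"
    unfolding prod.distrib[symmetric] using bm0 ba by (intro prod.cong) (auto intro!: F2)
  have 7: "(\<Prod>l\<in>B. t * b m - b l) = (t * b m - b m) * ((\<Prod>l\<in>J. t * b m - b l) * (\<Prod>l\<in>(B - {m}) - J. t * b m - b l))"
    unfolding prod.remove[OF fin(2) m] prod_split[OF fB' J] ..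
  show ?thesis unfolding 3 7 e prod.insert[OF fJ mJ] 5[symmetric] 6[symmetric] by (simp add: ac_simps)
qed

lemma G_bm:
  assumes fin: "finite A" "finite B" and m: "m \<in> B"
    and bm0: "b m \<noteq> 0" and ba: "\<And>i. i \<in> A \<Longrightarrow> b m \<noteq> a i"
    and bb: "\<And>l. l \<in> B \<Longrightarrow> l \<noteq> m \<Longrightarrow> b m \<noteq> b l" and b0: "\<And>l. l \<in> B \<Longrightarrow> b l \<noteq> 0"
  shows "G A B a b t k (b m) = ((\<Prod>j\<in>A. b m - t * a j) * (\<Prod>l\<in>B. t * b m - b l)) *
            (Lg k A (B - {m}) a b t - Rg k A (B - {m}) a b t)"
proof -
  let ?K = "(\<Prod>j\<in>A. b m - t * a j) * (\<Prod>l\<in>B. t * b m - b l)"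
  have fB': "finite (B - {m})" using fin by auto
  have Beq: "B = insert m (B - {m})" using m by auto
  have z1: "(\<Prod>l\<in>B. b m - b l) = 0" using fin m by (auto simp: prod_zero_iff)
  have S1: "(\<Sum>I\<in>subs (Suc k) A. cL A B a b t I * ((\<Prod>i\<in>I. t*b m - a i) * (\<Prod>j\<in>A-I. b m - a j) * (\<Prod>l\<in>B. b m - b l))) = 0"
    unfolding z1 by simp
  have S2: "(\<Sum>I\<in>subs k A. cL A B a b t I * ((\<Prod>j\<in>A-I. b m - t*a j) * (\<Prod>i\<in>I. b m - a i) * (\<Prod>l\<in>B. t*b m - b l)))
     = ?K * Lg k A (B - {m}) a b t"
    unfolding Lg_cL sum_distrib_left
    by (intro sum.cong refl S2term) (use assms in \<open>auto dest: subs_mem\<close>)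
  have S3: "(\<Sum>J\<in>subs (Suc k) B. cR A B a b t J * ((\<Prod>l\<in>J. t*b m - b l) * (\<Prod>l\<in>B-J. b m - b l) * (\<Prod>j\<in>A. b m - a j)))
     = ?K * Rg k A (B - {m}) a b t"
  proof -
    have "(\<Sum>J\<in>subs (Suc k) B. cR A B a b t J * ((\<Prod>l\<in>J. t*b m - b l) * (\<Prod>l\<in>B-J. b m - b l) * (\<Prod>j\<in>A. b m - a j)))
      = (\<Sum>J\<in>subs (Suc k) (B - {m}). cR A B a b t J * ((\<Prod>l\<in>J. t*b m - b l) * (\<Prod>l\<in>B-J. b m - b l) * (\<Prod>j\<in>A. b m - a j)))
      + (\<Sum>J\<in>subs k (B - {m}). cR A B a b t (insert m J) * ((\<Prod>l\<in>insert m J. t*b m - b l) * (\<Prod>l\<in>B-insert m J. b m - b l) * (\<Prod>j\<in>A. b m - a j)))"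
      using subs_split[OF fB', where x=m and k=k] by (simp add: insert_absorb[OF m])
    also have "(\<Sum>J\<in>subs (Suc k) (B - {m}). cR A B a b t J * ((\<Prod>l\<in>J. t*b m - b l) * (\<Prod>l\<in>B-J. b m - b l) * (\<Prod>j\<in>A. b m - a j))) = 0"
    proof (intro sum.neutral ballI)
      fix J assume "J \<in> subs (Suc k) (B - {m})"
      then have "m \<in> B - J" using m by (auto dest: subs_mem)
      then have "(\<Prod>l\<in>B-J. b m - b l) = 0" using fin by (auto simp: prod_zero_iff)
      then show "cR A B a b t J * ((\<Prod>l\<in>J. t*b m - b l) * (\<Prod>l\<in>B-J. b m - b l) * (\<Prod>j\<in>A. b m - a j)) = 0" by simp
    qed
    also have "(\<Sum>J\<in>subs k (B - {m}). cR A B a b t (insert m J) * ((\<Prod>l\<in>insert m J. t*b m - b l) * (\<Prod>l\<in>B-insert m J. b m - b l) * (\<Prod>j\<in>A. b m - a j)))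
        = ?K * Rg k A (B - {m}) a b t"
      unfolding Rg_cR sum_distrib_left
      by (intro sum.cong refl S3term) (use assms in \<open>auto dest: subs_mem\<close>)
    finally show ?thesis by simp
  qed
  show ?thesis unfolding G_def S1 S2 S3 by (simp add: algebra_simps)
qed



lemma prod_tpow: "(\<Prod>i\<in>I. b - t * c i) = t ^ card I * (\<Prod>i\<in>I. b / t - c i)" if "t \<noteq> (0::complex)"
proof -
  have "(\<Prod>i\<in>I. b - t * c i) = (\<Prod>i\<in>I. t * (b / t - c i))"
    using that by (intro prod.cong) (auto simp: field_simps)
  then show ?thesis by (simp add: prod.distrib)
qed

lemma S1term':
  assumes fin: "finite A" "finite B" and m: "m \<in> B" and I: "I \<subseteq> A" and t0: "t \<noteq> 0"
    and bm0: "b m \<noteq> 0" and ba: "\<And>i. i \<in> A \<Longrightarrow> b m \<noteq> a i"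
  shows "cL A B a b t I * ((\<Prod>i\<in>I. t*(b m / t) - a i) * (\<Prod>j\<in>A-I. b m / t - a j) * (\<Prod>l\<in>B. b m / t - b l))
     = ((\<Prod>j\<in>A. b m / t - a j) * (\<Prod>l\<in>B. b m / t - b l)) * (t ^ card I * cL A (B - {m}) a b t I)"
proof -
  have 5: "(\<Prod>i\<in>I. Fz t (a i / b m)) * (\<Prod>i\<in>I. t*(b m / t) - a i) = t ^ card I * (\<Prod>i\<in>I. b m / t - a i)"
    unfolding prod_tpow[OF t0, symmetric] prod.distrib[symmetric] using I bm0 ba t0 by (intro prod.cong) (auto intro!: F2)
  have 4: "(\<Prod>j\<in>A. b m / t - a j) = (\<Prod>i\<in>I. b m / t - a i) * (\<Prod>j\<in>A-I. b m / t - a j)"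
    by (rule prod_split[OF fin(1) I])
  have "cL A B a b t I * ((\<Prod>i\<in>I. t*(b m / t) - a i) * (\<Prod>j\<in>A-I. b m / t - a j) * (\<Prod>l\<in>B. b m / t - b l))
     = cL A (B - {m}) a b t I * ((\<Prod>i\<in>I. Fz t (a i / b m)) * (\<Prod>i\<in>I. t*(b m / t) - a i)) * (\<Prod>j\<in>A-I. b m / t - a j) * (\<Prod>l\<in>B. b m / t - b l)"
    unfolding cL_remove[OF fin(2) m] by (simp add: ac_simps)
  also have "\<dots> = ((\<Prod>j\<in>A. b m / t - a j) * (\<Prod>l\<in>B. b m / t - b l)) * (t ^ card I * cL A (B - {m}) a b t I)"
    unfolding 5 4 by (simp add: ac_simps)
  finally show ?thesis .
qed

lemma S3term':
  assumes fin: "finite A" "finite B" and m: "m \<in> B" and J: "J \<subseteq> B - {m}" and t0: "t \<noteq> 0"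
    and bm0: "b m \<noteq> 0"
    and bb: "\<And>l. l \<in> B \<Longrightarrow> l \<noteq> m \<Longrightarrow> b m \<noteq> b l"
  shows "cR A B a b t J * ((\<Prod>l\<in>J. t*(b m / t) - b l) * (\<Prod>l\<in>B-J. b m / t - b l) * (\<Prod>j\<in>A. b m / t - a j))
     = ((\<Prod>j\<in>A. b m / t - a j) * (\<Prod>l\<in>B. b m / t - b l)) * (t ^ card J * cR A (B - {m}) a b t J)"
proof -
  have fB': "finite (B - {m})" using fin by auto
  have fJ: "finite J" using J fB' finite_subset by blast
  have e: "B - J = insert m ((B - {m}) - J)" using J m by auto
  have mJ: "m \<notin> (B - {m}) - J" by auto
  have 3: "cR A B a b t J = (\<Prod>i\<in>J. Fz t (b i / b m)) * cR A (B - {m}) a b t J"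
    unfolding cR_def e prod.insert[OF finite_Diff[OF fB'] mJ] by (simp add: prod.distrib ac_simps)
  have 5: "(\<Prod>i\<in>J. Fz t (b i / b m)) * (\<Prod>i\<in>J. t*(b m / t) - b i) = t ^ card J * (\<Prod>i\<in>J. b m / t - b i)"
    unfolding prod_tpow[OF t0, symmetric] prod.distrib[symmetric] using J bm0 bb t0 by (intro prod.cong) (auto intro!: F2)
  have 4: "(\<Prod>l\<in>B. b m / t - b l) = (\<Prod>i\<in>J. b m / t - b i) * (\<Prod>l\<in>B-J. b m / t - b l)"
    using J by (intro prod_split[OF fin(2)]) auto
  have "cR A B a b t J * ((\<Prod>l\<in>J. t*(b m / t) - b l) * (\<Prod>l\<in>B-J. b m / t - b l) * (\<Prod>j\<in>A. b m / t - a j))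
    = cR A (B - {m}) a b t J * ((\<Prod>i\<in>J. Fz t (b i / b m)) * (\<Prod>i\<in>J. t*(b m / t) - b i)) * (\<Prod>l\<in>B-J. b m / t - b l) * (\<Prod>j\<in>A. b m / t - a j)"
    unfolding 3 by (simp add: ac_simps)
  also have "\<dots> = ((\<Prod>j\<in>A. b m / t - a j) * (\<Prod>l\<in>B. b m / t - b l)) * (t ^ card J * cR A (B - {m}) a b t J)"
    unfolding 5 4 by (simp add: ac_simps)
  finally show ?thesis .
qed

lemma G_bmt:
  assumes fin: "finite A" "finite B" and m: "m \<in> B" and t0: "t \<noteq> 0"
    and bm0: "b m \<noteq> 0" and ba: "\<And>i. i \<in> A \<Longrightarrow> b m \<noteq> a i"
    and bb: "\<And>l. l \<in> B \<Longrightarrow> l \<noteq> m \<Longrightarrow> b m \<noteq> b l"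
  shows "G A B a b t k (b m / t) = ((\<Prod>j\<in>A. b m / t - a j) * (\<Prod>l\<in>B. b m / t - b l)) * t ^ Suc k *
            (Lg (Suc k) A (B - {m}) a b t - Rg (Suc k) A (B - {m}) a b t)"
proof -
  let ?K = "(\<Prod>j\<in>A. b m / t - a j) * (\<Prod>l\<in>B. b m / t - b l)"
  have fB': "finite (B - {m})" using fin by auto
  have sp: "\<And>g. sum g (subs (Suc k) B) = sum g (subs (Suc k) (B - {m})) + (\<Sum>I\<in>subs k (B - {m}). g (insert m I))"
    using subs_split[OF fB', where x=m and k=k] by (simp add: insert_absorb[OF m])
  have z1: "(\<Prod>l\<in>B. t * (b m / t) - b l) = 0" using fin m t0 by (auto simp: prod_zero_iff)
  have S2: "(\<Sum>I\<in>subs k A. cL A B a b t I * ((\<Prod>j\<in>A-I. b m / t - t*a j) * (\<Prod>i\<in>I. b m / t - a i) * (\<Prod>l\<in>B. t*(b m / t) - b l))) = 0"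
    unfolding z1 by simp
  have S1: "(\<Sum>I\<in>subs (Suc k) A. cL A B a b t I * ((\<Prod>i\<in>I. t*(b m / t) - a i) * (\<Prod>j\<in>A-I. b m / t - a j) * (\<Prod>l\<in>B. b m / t - b l)))
     = ?K * (t ^ Suc k * Lg (Suc k) A (B - {m}) a b t)"
    unfolding Lg_cL sum_distrib_left
    by (intro sum.cong refl) (subst S1term', use assms in \<open>auto dest: subs_mem\<close>)
  have S3: "(\<Sum>J\<in>subs (Suc k) B. cR A B a b t J * ((\<Prod>l\<in>J. t*(b m / t) - b l) * (\<Prod>l\<in>B-J. b m / t - b l) * (\<Prod>j\<in>A. b m / t - a j)))
     = ?K * (t ^ Suc k * Rg (Suc k) A (B - {m}) a b t)"
  proof -
    have "(\<Sum>J\<in>subs (Suc k) B. cR A B a b t J * ((\<Prod>l\<in>J. t*(b m / t) - b l) * (\<Prod>l\<in>B-J. b m / t - b l) * (\<Prod>j\<in>A. b m / t - a j)))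
      = (\<Sum>J\<in>subs (Suc k) (B - {m}). cR A B a b t J * ((\<Prod>l\<in>J. t*(b m / t) - b l) * (\<Prod>l\<in>B-J. b m / t - b l) * (\<Prod>j\<in>A. b m / t - a j)))
      + (\<Sum>J\<in>subs k (B - {m}). cR A B a b t (insert m J) * ((\<Prod>l\<in>insert m J. t*(b m / t) - b l) * (\<Prod>l\<in>B-insert m J. b m / t - b l) * (\<Prod>j\<in>A. b m / t - a j)))"
      by (rule sp)
    also have "(\<Sum>J\<in>subs k (B - {m}). cR A B a b t (insert m J) * ((\<Prod>l\<in>insert m J. t*(b m / t) - b l) * (\<Prod>l\<in>B-insert m J. b m / t - b l) * (\<Prod>j\<in>A. b m / t - a j))) = 0"
    proof (intro sum.neutral ballI)
      fix J assume "J \<in> subs k (B - {m})"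
      then have "finite (insert m J)" using fB' by (auto dest: subs_mem intro: finite_subset)
      then have "(\<Prod>l\<in>insert m J. t*(b m / t) - b l) = 0" using t0 by (auto simp: prod_zero_iff)
      then show "cR A B a b t (insert m J) * ((\<Prod>l\<in>insert m J. t*(b m / t) - b l) * (\<Prod>l\<in>B-insert m J. b m / t - b l) * (\<Prod>j\<in>A. b m / t - a j)) = 0" by simp
    qed
    also have "(\<Sum>J\<in>subs (Suc k) (B - {m}). cR A B a b t J * ((\<Prod>l\<in>J. t*(b m / t) - b l) * (\<Prod>l\<in>B-J. b m / t - b l) * (\<Prod>j\<in>A. b m / t - a j)))
        = ?K * (t ^ Suc k * Rg (Suc k) A (B - {m}) a b t)"
      unfolding Rg_cR sum_distrib_left
      by (intro sum.cong refl) (subst S3term', use assms in \<open>auto dest: subs_mem\<close>)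
    finally show ?thesis by simp
  qed
  show ?thesis unfolding G_def S1 S2 S3 by (simp add: algebra_simps)
qed



lemma pfa_Fz: "pfa (\<lambda>t. Fz t w)"
proof -
  have "(\<lambda>t. Fz t w) = (\<lambda>t. (- w / (1 - w)) * t + 1 / (1 - w))"
    unfolding Fz_def by (rule ext) (simp add: diff_divide_distrib algebra_simps)
  then show ?thesis using pfa_lin[of "- w / (1 - w)" "1 / (1 - w)"] by simp
qed

lemma pfa_Lg: "finite A \<Longrightarrow> finite B \<Longrightarrow> pfa (\<lambda>t. Lg k A B a b t - Rg k A B a b t)"
  unfolding Lg_def Rg_def
  by (intro pfa_diff pfa_sum pfa_mult pfa_prod pfa_Fz finite_subs finite_Diff) (auto dest: subs_mem intro: finite_subset)

lemma base: "Lg k {} {} a b t = Rg k {} {} a b t"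
  unfolding Lg_def Rg_def by (intro sum.cong) (auto simp: subs_def)

lemma k0: "finite A \<Longrightarrow> finite B \<Longrightarrow> Lg 0 A B a b t = Rg 0 A B a b t"
  unfolding Lg_def Rg_def by (simp add: subs_0)



lemma main:
  "finite A \<Longrightarrow> finite B \<Longrightarrow> card A = n \<Longrightarrow> card B = n \<Longrightarrow> inj_on a A \<Longrightarrow> inj_on b B \<Longrightarrow>
   (\<forall>i\<in>A. a i \<noteq> 0) \<Longrightarrow> (\<forall>l\<in>B. b l \<noteq> 0) \<Longrightarrow> (\<forall>i\<in>A. \<forall>l\<in>B. a i \<noteq> b l) \<Longrightarrow>
   Lg k A B a b t = Rg k A B a b t"
proof (induction n arbitrary: A B a b k t)
  case 0
  then have "A = {}" "B = {}" by auto
  then show ?case using base by simp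
next
  case (Suc n)
  note hyp = Suc.prems
  show ?case
  proof (cases k)
    case 0 then show ?thesis using k0 hyp by simp
  next
    case (Suc k')
    obtain \<alpha> where al: "\<alpha> \<in> A" using hyp(3) by fastforce
    define A' where "A' = A - {\<alpha>}"
    have fA': "finite A'" "card A' = n" "\<alpha> \<notin> A'" and AA: "A = insert \<alpha> A'"
      using hyp al unfolding A'_def by auto
    have gen: "Lg k A B a b t = Rg k A B a b t" if t0: "t \<noteq> 0" and tb: "\<forall>l\<in>B. \<forall>m\<in>B. t * b l \<noteq> b m" for t
    proof -
      have Gz: "G A' B a b t k' z = 0" for z
      proof (rule pf_zero[OF G_pf[OF fA'(1) hyp(2)]])
        let ?S = "b ` B \<union> (\<lambda>l. b l / t) ` B"
        show "finite ?S" using hyp by auto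
        have inj2: "inj_on (\<lambda>l. b l / t) B" using hyp(6) t0 unfolding inj_on_def by auto
        have disj: "b ` B \<inter> (\<lambda>l. b l / t) ` B = {}"
        proof (rule ccontr)
          assume "b ` B \<inter> (\<lambda>l. b l / t) ` B \<noteq> {}"
          then obtain l m where "l \<in> B" "m \<in> B" "b l = b m / t" by auto
          then have "t * b l = b m" using t0 by (simp add: field_simps)
          then show False using tb \<open>l \<in> B\<close> \<open>m \<in> B\<close> by blast
        qed
        have "card ?S = Suc n + Suc n"
          using hyp inj2 disj by (simp add: card_Un_disjoint card_image)
        then show "card A' + card B < card ?S" using fA' hyp by simp
        fix z assume "z \<in> ?S"
        then show "G A' B a b t k' z = 0"
        proof
          assume "z \<in> b ` B"
          then obtain m where m: "m \<in> B" "z = b m" by auto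
          have ih: "Lg k' A' (B - {m}) a b t = Rg k' A' (B - {m}) a b t"
            by (rule Suc.IH) (use hyp fA' m in \<open>auto simp: A'_def intro: inj_on_subset\<close>)
          have "\<forall>i\<in>A. b m \<noteq> a i" using hyp m by metis
          then show ?thesis unfolding m(2)
            by (subst G_bm) (use hyp fA' m ih in \<open>auto simp: A'_def inj_on_def\<close>)
        next
          assume "z \<in> (\<lambda>l. b l / t) ` B"
          then obtain m where m: "m \<in> B" "z = b m / t" by auto
          have ih: "Lg (Suc k') A' (B - {m}) a b t = Rg (Suc k') A' (B - {m}) a b t"
            by (rule Suc.IH) (use hyp fA' m in \<open>auto simp: A'_def intro: inj_on_subset\<close>)
          have "\<forall>i\<in>A. b m \<noteq> a i" using hyp m by metis
          then show ?thesis unfolding m(2)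
            by (subst G_bmt) (use hyp fA' m ih t0 in \<open>auto simp: A'_def inj_on_def\<close>)
        qed
      qed
      have "(Lg (Suc k') (insert \<alpha> A') B (a(\<alpha>:=a \<alpha>)) b t - Rg (Suc k') (insert \<alpha> A') B (a(\<alpha>:=a \<alpha>)) b t)
           * ((\<Prod>l\<in>B. a \<alpha> - b l) * (\<Prod>j\<in>A'. a \<alpha> - a j)) = G A' B a b t k' (a \<alpha>)"
        by (rule G_eq) (use hyp fA' al in \<open>auto simp: A'_def inj_on_def\<close>)
      then have "(Lg k A B a b t - Rg k A B a b t) * ((\<Prod>l\<in>B. a \<alpha> - b l) * (\<Prod>j\<in>A'. a \<alpha> - a j)) = 0"
        using Gz Suc AA by simp
      moreover have "(\<Prod>l\<in>B. a \<alpha> - b l) \<noteq> 0" using hyp al by (auto simp: prod_zero_iff)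
      moreover have "(\<Prod>j\<in>A'. a \<alpha> - a j) \<noteq> 0" using hyp al fA'
        by (auto simp: prod_zero_iff A'_def inj_on_def)
      ultimately show ?thesis by simp
    qed
    let ?E = "insert 0 ((\<lambda>(l, m). b m / b l) ` (B \<times> B))"
    have "Lg k A B a b t - Rg k A B a b t = 0"
    proof (rule pfa_zero[OF pfa_Lg[OF hyp(1,2)], of ?E])
      show "finite ?E" using hyp by auto
      fix s assume s: "s \<notin> ?E"
      have "\<forall>l\<in>B. \<forall>m\<in>B. s * b l \<noteq> b m"
      proof (intro ballI notI)
        fix l m assume "l \<in> B" "m \<in> B" "s * b l = b m"
        then have "s = b m / b l" using hyp by (auto simp: field_simps)
        then show False using s \<open>l \<in> B\<close> \<open>m \<in> B\<close> by auto
      qed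
      then show "Lg k A B a b s - Rg k A B a b s = 0" using gen s by auto
    qed
    then show ?thesis by simp
  qed
qed


theorem theorem2p2:
  fixes k n :: nat and q t :: complex and x y :: "nat \<Rightarrow> complex"
  assumes "1 \<le> k" and "k \<le> n"
    and "q \<noteq> 0"
    and "\<And>l. l \<in> {1..n} \<Longrightarrow> x l \<noteq> 0"
    and "\<And>i. i \<in> {1..n} \<Longrightarrow> y i \<noteq> 0"
    and "\<And>i j. i \<in> {1..n} \<Longrightarrow> j \<in> {1..n} \<Longrightarrow> i \<noteq> j \<Longrightarrow> x i \<noteq> x j"
    and "\<And>i j. i \<in> {1..n} \<Longrightarrow> j \<in> {1..n} \<Longrightarrow> i \<noteq> j \<Longrightarrow> y i \<noteq> y j"
    and "\<And>i l. i \<in> {1..n} \<Longrightarrow> l \<in> {1..n} \<Longrightarrow> y i \<noteq> q * x l"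
  shows "hirz_X k n q t x y = hirz_Xdual k n q t x y"
proof -
  have L: "hirz_X k n q t x y = Lg k {1..n} {1..n} y (\<lambda>l. q * x l) t"
    unfolding hirz_X_def Lg_def fixed_pts_def subs_def Fz_def by simp
  have R: "hirz_Xdual k n q t x y = Rg k {1..n} {1..n} y (\<lambda>l. q * x l) t"
    unfolding hirz_Xdual_def Rg_def fixed_pts_def subs_def Fz_def using assms(3) by simp
  have "Lg k {1..n} {1..n} y (\<lambda>l. q * x l) t = Rg k {1..n} {1..n} y (\<lambda>l. q * x l) t"
  proof (rule main[where n=n])
    show "inj_on y {1..n}" unfolding inj_on_def using assms(7) by blast
    show "inj_on (\<lambda>l. q * x l) {1..n}" unfolding inj_on_def using assms(6) assms(3) by (metis atLeastAtMost_iff mult_left_cancel)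
  qed (use assms in auto)
  then show ?thesis using L R by simp
qed

end
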